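(* There exist a closed flat surface $N$ and a configuration of two disjoint embedded open metric disks of the same diameter $h$ in $N$, with centers at distance $d$, realizing the supremum of $h\sqrt{4h^2+d^2}/\mathsf{vol}(N)$ over all closed flat surfaces and all such configurations of two disjoint disks of equal diameter.
   Context: A closed flat surface is a flat torus or flat Klein bottle; $\mathsf{vol}$ is area; $d$ is the distance between the centers of the two disks in the flat metric. *)

theory Defs
  imports Complex_Main
begin

text \<open>The Euclidean plane is modelled by the complex numbers.  A closed flat
surface is a flat torus or a flat Klein bottle, given as the quotient of the
plane by its deck group.\<close>

datatype flat_surface =
    FlatTorus complex complex   (* C / (Z u + Z v) *)
  | FlatKlein real real         (* C / <z |-> cnj z + a, z |-> z + i b> *)

fun flat_surface_ok :: "flat_surface \<Rightarrow> bool" where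
  "flat_surface_ok (FlatTorus u v) = (Im (cnj u * v) \<noteq> 0)"
| "flat_surface_ok (FlatKlein a b) = (a > 0 \<and> b > 0)"

fun deck_group :: "flat_surface \<Rightarrow> (complex \<Rightarrow> complex) set" where
  "deck_group (FlatTorus u v) =
     {(\<lambda>z. z + of_int m * u + of_int n * v) | m n :: int. True}"
| "deck_group (FlatKlein a b) =
     {(\<lambda>z. (if even k then z else cnj z) + of_int k * complex_of_real a
            + of_int n * complex_of_real b * \<i>) | k n :: int. True}"

fun flat_vol :: "flat_surface \<Rightarrow> real" where
  "flat_vol (FlatTorus u v) = \<bar>Im (cnj u * v)\<bar>"
| "flat_vol (FlatKlein a b) = a * b"

definition flat_dist :: "flat_surface \<Rightarrow> complex \<Rightarrow> complex \<Rightarrow> real" where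
  "flat_dist N p q = Inf {dist p (g q) | g. g \<in> deck_group N}"

definition embedded_disk :: "flat_surface \<Rightarrow> complex \<Rightarrow> real \<Rightarrow> bool" where
  "embedded_disk N p r \<longleftrightarrow>
     (\<forall>x y g. dist x p < r \<longrightarrow> dist y p < r \<longrightarrow> g \<in> deck_group N \<longrightarrow> x = g y \<longrightarrow> x = y)"

definition disjoint_disks :: "flat_surface \<Rightarrow> complex \<Rightarrow> complex \<Rightarrow> real \<Rightarrow> bool" where
  "disjoint_disks N p q r \<longleftrightarrow>
     (\<forall>x y g. dist x p < r \<longrightarrow> dist y q < r \<longrightarrow> g \<in> deck_group N \<longrightarrow> x \<noteq> g y)"

definition two_disk_config :: "flat_surface \<Rightarrow> complex \<Rightarrow> complex \<Rightarrow> real \<Rightarrow> bool" where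
  "two_disk_config N p q h \<longleftrightarrow>
     flat_surface_ok N \<and> h > 0 \<and> embedded_disk N p (h/2) \<and> embedded_disk N q (h/2)
     \<and> disjoint_disks N p q (h/2)"

definition two_disk_ratio :: "flat_surface \<Rightarrow> complex \<Rightarrow> complex \<Rightarrow> real \<Rightarrow> real" where
  "two_disk_ratio N p q h = h * sqrt (4 * h\<^sup>2 + (flat_dist N p q)\<^sup>2) / flat_vol N"

end

theory Submission
  imports Defs
begin


lemma torus_ineq:
  fixes al ga h d :: real
  assumes h: "h > 0" and al: "h \<le> al" and g: "3*al^2 \<le> 4*ga^2"
    and d1: "h^2 \<le> d^2" and d2: "4*d^2 \<le> al^2 + ga^2"
  shows "3*h^2*(4*h^2 + d^2) \<le> 5*al^2*ga^2"
proof -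
  define S where "S = al^2"
  define T where "T = ga^2"
  define H where "H = h^2"
  have H0: "H > 0" using h by (simp add: H_def)
  have SH: "H \<le> S" unfolding S_def H_def using al h by (simp add: power_mono)
  have T0: "3*S \<le> 4*T" using g by (simp add: S_def T_def)
  have ST: "4*H \<le> S + T" using d1 d2 by (simp add: S_def T_def H_def)
  have goal: "12*H^2 + 3*H*d^2 \<le> 5*S*T"
  proof -
    have "3*H*d^2 \<le> 3*H*((S+T)/4)"
      using d2 H0 by (intro mult_left_mono) (auto simp: S_def T_def)
    moreover have "48*H^2 + 3*H*(S+T) \<le> 20*S*T"
    proof (cases "T \<ge> 3*H")
      case True
      have "(S - H)*(20*T - 3*H) \<ge> 0" using SH True H0 by (intro mult_nonneg_nonneg) auto
      moreover have "H*(3*H) \<le> H*T" using True H0 by (intro mult_left_mono) auto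
      ultimately show ?thesis by (simp add: power2_eq_square algebra_simps)
    next
      case False
      define e where "e = S - (4*H - T)"
      have e0: "e \<ge> 0" using ST by (simp add: e_def)
      have TH: "T \<ge> H" using T0 ST H0 by linarith
      have "(T - H)*(3*H - T) \<ge> 0" using TH False by (intro mult_nonneg_nonneg) auto
      moreover have "e*(20*T - 3*H) \<ge> 0" using e0 TH H0 by (intro mult_nonneg_nonneg) auto
      moreover have "20*S*T - (48*H^2 + 3*H*(S+T)) = 20*((T - H)*(3*H - T)) + e*(20*T - 3*H)"
        by (simp add: e_def algebra_simps power2_eq_square)
      ultimately show ?thesis by linarith
    qed
    ultimately show ?thesis by linarith
  qed
  then show ?thesis by (simp add: S_def T_def H_def power2_eq_square algebra_simps)
qed



lemma sq_le: fixes x y :: real shows "\<bar>x\<bar> \<le> y \<Longrightarrow> x^2 \<le> y^2"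
  by (metis abs_ge_zero power2_abs power_mono)

lemma klein_case1:
  fixes a b h E Oo U W D :: real
  assumes h: "h > 0" and True: "h \<le> a" and b: "h \<le> b"
    and E: "E \<ge> 0" and Oo: "Oo \<ge> 0" and EO: "E + Oo = a"
    and U: "\<bar>U\<bar> \<le> b/2" and W: "\<bar>W\<bar> \<le> b/2"
    and D0: "h^2 \<le> D" and DE: "D \<le> E^2 + U^2" and DO: "D \<le> Oo^2 + W^2"
  shows "3*h^2*(4*h^2 + D) \<le> 5*a^2*b^2"
proof -
  define H where "H = h^2"
  have H0: "H > 0" using h by (simp add: H_def)
    have mEO: "min E Oo \<le> a/2" using EO by linarith
    have U2: "U^2 \<le> (b/2)^2" using U by (rule sq_le)
    have W2: "W^2 \<le> (b/2)^2" using W by (rule sq_le)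
    have "min E Oo ^2 \<le> (a/2)^2" using mEO E Oo by (intro power_mono) auto
    then have Db: "D \<le> (a/2)^2 + (b/2)^2"
      using DE DO U2 W2 by (cases "E \<le> Oo") (auto simp: min_def)
    define S where "S = a^2"
    define T where "T = b^2"
    have SH: "H \<le> S" unfolding S_def H_def using True h by (simp add: power_mono)
    have TH: "H \<le> T" unfolding T_def H_def using b h by (simp add: power_mono)
    have Db': "4*D \<le> S + T" using Db by (simp add: S_def T_def power_divide)
    have "(S - H)*(T - H) \<ge> 0" using SH TH by simp
    then have "S*T \<ge> H*(S+T) - H^2" by (simp add: algebra_simps power2_eq_square)
    moreover have "4*H \<le> S + T" using D0 Db' by (simp add: H_def)
    moreover have "3*H*D \<le> 3*H*((S+T)/4)" using Db' H0 by (intro mult_left_mono) auto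
    moreover have "H*(4*H) \<le> H*(S+T)" using \<open>4*H \<le> S+T\<close> H0 by (intro mult_left_mono) auto
    ultimately have "12*H^2 + 3*H*D \<le> 5*S*T" by (simp add: power2_eq_square algebra_simps)
    then show ?thesis by (simp add: S_def T_def H_def power2_eq_square algebra_simps)
qed
lemma klein_main:
  fixes a h H c \<beta> P Q X Y D :: real
  assumes h: "h > 0" and HH: "H = h^2" and a: "h \<le> 2*a" and ah0: "a < h"
    and c0: "c > 0" and cc: "c^2 = H - a^2" and \<beta>0: "\<beta> > 0"
    and P0: "P \<ge> 0" and Q0: "Q \<ge> 0" and PQ: "P + Q = a" and X: "\<bar>X\<bar> \<le> \<beta> - c" and Y: "\<bar>Y\<bar> \<le> \<beta>"
    and DX: "D \<le> P^2 + X^2" and HY: "H \<le> Q^2 + Y^2" and DH: "H \<le> D"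
  shows "3*H*(4*H + D) \<le> 20*a^2*\<beta>^2"
proof -
  have H0: "H > 0" using h HH by simp
  have a0: "a > 0" using a h by linarith
  have \<beta>c: "\<beta> - c \<ge> 0" using X by linarith
  have X2: "X^2 \<le> (\<beta>-c)^2" using X by (rule sq_le)
  have Y2: "Y^2 \<le> \<beta>^2" using Y by (rule sq_le)
  have P2: "P^2 \<le> a^2" using P0 Q0 PQ by (intro power_mono) auto
  have h4: "H \<le> 4*a^2"
  proof -
    have "h^2 \<le> (2*a)^2" using a h by (intro power_mono) auto
    then show ?thesis by (simp add: HH power_mult_distrib)
  qed
  have ah: "20*a^2 \<ge> 3*H" using h4 H0 by linarith
  have Dgen: "D \<le> H + \<beta>^2 - 2*\<beta>*c"
  proof -
    have "D \<le> a^2 + (\<beta>-c)^2" using DX X2 P2 by linarith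
    also have "... = (a^2 + c^2) + \<beta>^2 - 2*\<beta>*c" by (simp add: power2_eq_square algebra_simps)
    finally show ?thesis using cc by simp
  qed
  define \<phi> where "\<phi> = (\<lambda>x. (20*a^2 - 3*H)*x^2 + 6*H*c*x - 15*H^2)"
  have \<phi>mono: "\<phi> x \<le> \<phi> y" if "0 \<le> x" "x \<le> y" for x y
  proof -
    have "x^2 \<le> y^2" using that by (intro power_mono) auto
    then have "(20*a^2 - 3*H)*x^2 \<le> (20*a^2 - 3*H)*y^2" using ah by (intro mult_left_mono) auto
    moreover have "6*H*c*x \<le> 6*H*c*y" using that H0 c0 by (intro mult_left_mono) auto
    ultimately show ?thesis by (simp add: \<phi>_def)
  qed
  have fromphi: "3*H*(4*H + D) \<le> 20*a^2*\<beta>^2" if "\<phi> \<beta> \<ge> 0"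
  proof -
    have "3*H*D \<le> 3*H*(H + \<beta>^2 - 2*\<beta>*c)" using Dgen H0 by (intro mult_left_mono) auto
    moreover have "3*H*(H + \<beta>^2 - 2*\<beta>*c) = 20*a^2*\<beta>^2 - 12*H*H - \<phi> \<beta>"
      by (simp add: \<phi>_def power2_eq_square algebra_simps)
    ultimately show ?thesis using that by (simp add: algebra_simps)
  qed
  show ?thesis
  proof (cases "4*a^2 \<le> 3*H")
    case True
    have "(\<beta> - c)^2 = \<beta>^2 - 2*\<beta>*c + c^2" by (simp add: power2_eq_square algebra_simps)
    then have "(\<beta> - c)^2 \<ge> c^2" using DH Dgen by linarith
    then have "\<beta> - c \<ge> c" using \<beta>c by (rule power2_le_imp_le)
    then have "\<phi> (2*c) \<le> \<phi> \<beta>" using c0 by (intro \<phi>mono) auto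
    moreover have "\<phi> (2*c) = 5*((4*a^2 - H)*(3*H - 4*a^2))"
    proof -
      have "\<phi> (2*c) = 80*a^2*c^2 - 15*H^2" by (simp add: \<phi>_def power2_eq_square algebra_simps)
      also have "... = 80*a^2*(H - a^2) - 15*H^2" using cc by simp
      also have "... = 5*((4*a^2 - H)*(3*H - 4*a^2))" by (simp add: power2_eq_square algebra_simps)
      finally show ?thesis .
    qed
    moreover have "(4*a^2 - H)*(3*H - 4*a^2) \<ge> 0" using True h4 by (intro mult_nonneg_nonneg) auto
    ultimately show ?thesis using fromphi by linarith
  next
    case big: False
    have c2: "4*c^2 < H" using big cc by linarith
    have ch: "2*c \<le> h"
    proof -
      have "(2*c)^2 = 4*c^2" by (simp add: power_mult_distrib)
      then have "(2*c)^2 \<le> h^2" using c2 HH by linarith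
      then show ?thesis by (rule power2_le_imp_le) (use h in auto)
    qed
    show ?thesis
    proof (cases "h \<le> \<beta>")
      case True
      then have "\<phi> h \<le> \<phi> \<beta>" using h by (intro \<phi>mono) auto
      moreover have "\<phi> h = H*((h - 2*c)*(2*h + 10*c))"
      proof -
        have "\<phi> h = 20*a^2*H - 18*H^2 + 6*H*h*c" by (simp add: \<phi>_def HH power2_eq_square algebra_simps)
        also have "... = 20*(H - c^2)*H - 18*H^2 + 6*H*h*c" using cc by simp
        also have "... = H*((h - 2*c)*(2*h + 10*c))" by (simp add: HH power2_eq_square algebra_simps)
        finally show ?thesis .
      qed
      moreover have "H*((h - 2*c)*(2*h + 10*c)) \<ge> 0" using ch H0 c0 h by (intro mult_nonneg_nonneg) auto
      ultimately show ?thesis using fromphi by linarith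
    next
      case small: False
      define s where "s = sqrt (H - \<beta>^2)"
      have \<beta>H: "\<beta>^2 < H" using small \<beta>0 h unfolding HH by (simp add: power_strict_mono)
      have s0: "s \<ge> 0" using \<beta>H by (simp add: s_def)
      have ss: "s^2 = H - \<beta>^2" using \<beta>H by (simp add: s_def)
      have "s^2 \<le> Q^2" using HY Y2 ss by linarith
      then have Qs: "s \<le> Q" by (rule power2_le_imp_le) (use Q0 in auto)
      have "P^2 \<le> (a - s)^2" using P0 PQ Qs by (intro power_mono) auto
      then have "D \<le> (a - s)^2 + (\<beta> - c)^2" using DX X2 by linarith
      also have "... = (a^2 + c^2) + (s^2 + \<beta>^2) - 2*(a*s + \<beta>*c)" by (simp add: power2_eq_square algebra_simps)
      also have "... = 2*H - 2*(a*s + \<beta>*c)" using cc ss by simp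
      finally have Dk: "D \<le> 2*H - 2*(a*s + \<beta>*c)" .
      define k where "k = a*s + \<beta>*c"
      define m where "m = a*\<beta> - c*s"
      have k0: "k \<ge> 0" using a0 s0 \<beta>0 c0 by (simp add: k_def)
      have kH: "2*k \<le> H" using Dk DH by (simp add: k_def)
      have id: "m^2 + k^2 = H^2"
      proof -
        have "m^2 + k^2 = (a^2 + c^2)*(\<beta>^2 + s^2)" by (simp add: m_def k_def power2_eq_square algebra_simps)
        also have "... = H*H" using cc ss by simp
        finally show ?thesis by (simp add: power2_eq_square)
      qed
      have m0: "m \<ge> 0"
      proof (rule ccontr)
        assume "\<not> m \<ge> 0"
        then have mneg: "m < 0" by simp
        have "c*s \<ge> -m" using a0 \<beta>0 mneg by (simp add: m_def)
        then have "(-m)^2 \<le> (c*s)^2" using mneg by (intro power_mono) auto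
        then have cs1: "c^2*s^2 \<ge> H^2 - k^2" using id by (simp add: power_mult_distrib)
        have "k^2 \<le> (H/2)^2" using k0 kH by (intro power_mono) auto
        then have cs2: "c^2*s^2 \<ge> 3*H^2/4" using cs1 by (simp add: power_divide)
        have "s^2 \<le> H" using ss \<beta>H by simp
        then have "c^2*s^2 \<le> (H/4)*H" using c2 H0 by (intro mult_mono) auto
        then show False using cs2 mult_pos_pos[OF H0 H0] by (simp add: power2_eq_square)
      qed
      have "a*\<beta> \<ge> m" using c0 s0 by (simp add: m_def)
      then have "m^2 \<le> (a*\<beta>)^2" using m0 by (intro power_mono) auto
      then have ab: "a^2*\<beta>^2 \<ge> H^2 - k^2" using id by (simp add: power_mult_distrib)
      have "(H - 2*k)*(2*H + 10*k) \<ge> 0" using kH k0 H0 by (intro mult_nonneg_nonneg) auto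
      moreover have "3*H*D \<le> 3*H*(2*H - 2*k)" using Dk H0 by (intro mult_left_mono) (auto simp: k_def)
      ultimately show ?thesis using ab by (simp add: power2_eq_square algebra_simps)
    qed
  qed
qed
lemma klein_ineq:
  fixes a b h E Oo U W D :: real
  assumes h: "h > 0" and a: "h \<le> 2*a" and b: "h \<le> b"
    and E: "E \<ge> 0" and Oo: "Oo \<ge> 0" and EO: "E + Oo = a"
    and U: "\<bar>U\<bar> \<le> b/2" and W: "\<bar>W\<bar> \<le> b/2"
    and g1: "h^2 \<le> a^2 + (U+W)^2" and g2: "h^2 \<le> a^2 + (U+W-b)^2" and g3: "h^2 \<le> a^2 + (U+W+b)^2"
    and g4: "h^2 \<le> a^2 + (W-U)^2" and g5: "h^2 \<le> a^2 + (W-U-b)^2" and g6: "h^2 \<le> a^2 + (W-U+b)^2"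
    and D0: "h^2 \<le> D" and DE: "D \<le> E^2 + U^2" and DO: "D \<le> Oo^2 + W^2"
    and hE: "h^2 \<le> E^2 + U^2" and hO: "h^2 \<le> Oo^2 + W^2"
  shows "3*h^2*(4*h^2 + D) \<le> 5*a^2*b^2"
proof (cases "h \<le> a")
  case True
  show ?thesis using klein_case1[OF h True b E Oo EO U W D0 DE DO] .
next
  case False
  define H where "H = h^2"
  have a0: "a > 0" using a h by linarith
  have b0: "b > 0" using b h by linarith
  define c where "c = sqrt (H - a^2)"
  have aH: "a^2 < H" using False a0 h unfolding H_def by (simp add: power_strict_mono)
  have c0: "c > 0" using aH by (simp add: c_def)
  have cc: "c^2 = H - a^2" using aH by (simp add: c_def)
  have sq: "c \<le> \<bar>x\<bar>" if "h^2 \<le> a^2 + x^2" for x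
  proof -
    have "c^2 \<le> \<bar>x\<bar>^2" using cc that by (simp add: H_def)
    then show "c \<le> \<bar>x\<bar>" by (rule power2_le_imp_le) simp
  qed
  have l1: "c \<le> \<bar>U+W\<bar>" "c \<le> \<bar>U+W-b\<bar>" "c \<le> \<bar>U+W+b\<bar>"
    "c \<le> \<bar>W-U\<bar>" "c \<le> \<bar>W-U-b\<bar>" "c \<le> \<bar>W-U+b\<bar>"
    using sq g1 g2 g3 g4 g5 g6 by auto
  define \<beta> where "\<beta> = b/2"
  have \<beta>0: "\<beta> > 0" using b0 by (simp add: \<beta>_def)
  have b\<beta>: "b^2 = 4*\<beta>^2" by (simp add: \<beta>_def power_divide)
  have minUW: "\<bar>U\<bar> \<le> \<beta> - c \<or> \<bar>W\<bar> \<le> \<beta> - c"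
    using l1 U W unfolding \<beta>_def by linarith
  have ah0: "a < h" using False by simp
  have HH: "H = h^2" by (simp add: H_def)
  from minUW have "3*H*(4*H + D) \<le> 20*a^2*\<beta>^2"
  proof
    assume X: "\<bar>U\<bar> \<le> \<beta> - c"
    show ?thesis by (rule klein_main[OF h HH a ah0 c0 cc \<beta>0 E Oo EO X _ DE])
      (use W hO D0 in \<open>auto simp: \<beta>_def H_def\<close>)
  next
    assume X: "\<bar>W\<bar> \<le> \<beta> - c"
    have OE: "Oo + E = a" using EO by simp
    show ?thesis by (rule klein_main[OF h HH a ah0 c0 cc \<beta>0 Oo E OE X _ DO])
      (use U hE D0 in \<open>auto simp: \<beta>_def H_def\<close>)
  qed
  then show ?thesis by (simp add: H_def b\<beta>)
qed



lemma flat_dist_le: "g \<in> deck_group N \<Longrightarrow> flat_dist N p q \<le> dist p (g q)"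
  unfolding flat_dist_def
  by (rule cInf_lower) (auto simp: bdd_below_def intro!: exI[of _ 0])

lemma flat_dist_ge:
  assumes "deck_group N \<noteq> {}" "\<And>g. g \<in> deck_group N \<Longrightarrow> h \<le> dist p (g q)"
  shows "h \<le> flat_dist N p q"
  unfolding flat_dist_def by (rule cInf_greatest) (use assms in auto)

lemma disj_far:
  assumes d: "disjoint_disks N p q r" and g: "g \<in> deck_group N"
    and ge: "g = (\<lambda>z. (if e then z else cnj z) + c)"
  shows "2*r \<le> dist p (g q)"
proof (rule ccontr)
  assume "\<not> 2*r \<le> dist p (g q)"
  then have lt: "dist p (g q) < 2*r" by simp
  define x where "x = (p + g q)/2"
  define y where "y = (if e then x - c else cnj (x - c))"
  have gy: "x = g y" by (cases e) (simp_all add: ge y_def)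
  have "dist x p = dist p (g q)/2"
    by (simp add: x_def dist_norm field_simps norm_minus_commute)
  then have xp: "dist x p < r" using lt by simp
  have "dist y q = dist x (g q)"
  proof (cases e)
    case True
    then show ?thesis by (simp add: y_def ge dist_norm algebra_simps)
  next
    case False
    have "dist y q = cmod (cnj (x - c) - q)" by (simp add: y_def False dist_norm)
    also have "... = cmod (cnj (cnj (x - c) - q))" by (rule complex_mod_cnj[symmetric])
    also have "... = cmod (x - (cnj q + c))" by (simp add: algebra_simps)
    finally show ?thesis by (simp add: ge False dist_norm)
  qed
  also have "dist x (g q) = dist p (g q)/2"
    by (simp add: x_def dist_norm field_simps)
  finally have yq: "dist y q < r" using lt by simp
  from d xp yq g gy show False unfolding disjoint_disks_def by blast
qed

lemma emb_trans:
  assumes emb: "embedded_disk N p r" and g: "(\<lambda>z. z + t) \<in> deck_group N" and t: "t \<noteq> 0"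
  shows "2*r \<le> cmod t"
proof (rule ccontr)
  assume "\<not> 2*r \<le> cmod t"
  then have lt: "cmod t < 2*r" by simp
  define x where "x = p + t/2"
  define y where "y = p - t/2"
  have "dist x p < r" "dist y p < r" using lt by (simp_all add: x_def y_def dist_norm norm_divide)
  moreover have "x = (\<lambda>z. z + t) y" by (simp add: x_def y_def)
  moreover have "x \<noteq> y" using t by (simp add: x_def y_def)
  ultimately show False using emb g unfolding embedded_disk_def by blast
qed

lemma emb_glide:
  assumes emb: "embedded_disk N p r" and g: "(\<lambda>z. cnj z + c) \<in> deck_group N" and c: "Re c \<noteq> 0"
  shows "2*r \<le> cmod (cnj p + c - p)"
proof (rule ccontr)
  define D where "D = cnj p + c - p"
  assume "\<not> 2*r \<le> cmod (cnj p + c - p)"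
  then have lt: "cmod D < 2*r" by (simp add: D_def)
  define x where "x = p + D/2"
  define y where "y = p - cnj D/2"
  have "dist x p < r" "dist y p < r" using lt by (simp_all add: x_def y_def dist_norm norm_divide)
  moreover have "x = (\<lambda>z. cnj z + c) y" by (simp add: x_def y_def D_def field_simps)
  moreover have "x \<noteq> y"
  proof
    assume "x = y"
    then have "Re x = Re y" by simp
    then show False using c by (simp add: x_def y_def D_def)
  qed
  ultimately show False using emb g unfolding embedded_disk_def by blast
qed

lemma torus_mem: "(\<lambda>z. z + (of_int m * u + of_int n * v)) \<in> deck_group (FlatTorus u v)"
  unfolding deck_group.simps by (rule CollectI, rule exI[of _ m], rule exI[of _ n]) (simp add: add.assoc)

lemma klein_mem: "(\<lambda>z. (if even k then z else cnj z) + (of_int k * complex_of_real a + of_int n * complex_of_real b * \<i>))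
    \<in> deck_group (FlatKlein a b)"
  unfolding deck_group.simps by (rule CollectI, rule exI[of _ k], rule exI[of _ n]) (simp add: add.assoc)



lemma im_cross: "Im (cnj (of_int m * u + of_int n * v) * (of_int k * u + of_int l * v))
   = of_int (m*l - n*k) * Im (cnj u * v)"
  by (simp add: algebra_simps)

lemma re_self: "Re (cnj u * u) = (cmod u)^2" "Im (cnj u * u) = 0"
  using cmod_power2[of u] by (simp_all add: power2_eq_square)

lemma norm_coord: "(cmod U)^2 * (cmod z)^2 = (Re (cnj U * z))^2 + (Im (cnj U * z))^2"
proof -
  have "(cmod (cnj U * z))^2 = (Re (cnj U * z))^2 + (Im (cnj U * z))^2" by (rule cmod_power2)
  moreover have "cmod (cnj U * z) = cmod U * cmod z" by (simp add: norm_mult)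
  ultimately show ?thesis by (simp add: power_mult_distrib)
qed

lemma rounding: fixes x c :: real assumes "c \<noteq> 0" shows "\<exists>k::int. \<bar>x - of_int k * c\<bar> \<le> \<bar>c\<bar>/2"
proof -
  define t where "t = x/c"
  define k where "k = floor (t + 1/2)"
  have "of_int k \<le> t + 1/2" "t + 1/2 < of_int k + 1" unfolding k_def by linarith+
  then have "\<bar>t - of_int k\<bar> \<le> 1/2" by linarith
  moreover have "x - of_int k * c = c * (t - of_int k)" using assms by (simp add: t_def field_simps)
  moreover have "\<bar>c\<bar> * \<bar>t - of_int k\<bar> \<le> \<bar>c\<bar> * (1/2)" using calculation(1) by (rule mult_left_mono) simp
  ultimately have "\<bar>x - of_int k * c\<bar> \<le> \<bar>c\<bar> * (1/2)" by (simp add: abs_mult)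
  then show ?thesis by auto
qed

lemma sq_le_helper: fixes x y :: real shows "\<bar>x\<bar> \<le> y \<Longrightarrow> x^2 \<le> y^2"
  by (metis abs_ge_zero power2_abs power_mono)

lemma torus_geom:
  fixes u v w :: complex and h :: real
  assumes D: "Im (cnj u * v) \<noteq> 0" and h: "h > 0"
   and F1: "\<And>m n. of_int m * u + of_int n * v \<noteq> 0 \<Longrightarrow> h \<le> cmod (of_int m * u + of_int n * v)"
  shows "\<exists>m n \<alpha> \<gamma>. h \<le> \<alpha> \<and> 3*\<alpha>^2 \<le> 4*\<gamma>^2 \<and> \<alpha>^2*\<gamma>^2 = (Im (cnj u * v))^2
     \<and> 4*(cmod (w - (of_int m * u + of_int n * v)))^2 \<le> \<alpha>^2 + \<gamma>^2"
proof -
  define D0 where "D0 = Im (cnj u * v)"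
  define L where "L = (\<lambda>(m::int) (n::int). of_int m * u + of_int n * v)"
  have D0nz: "D0 \<noteq> 0" using D by (simp add: D0_def)
  have u0: "u \<noteq> 0" using D by auto
  have cramer1: "Im (cnj (L m n) * v) = of_int m * D0" for m n
    using im_cross[of m u n v 0 1] by (simp add: L_def D0_def)
  have cramer2: "Im (cnj u * L m n) = of_int n * D0" for m n
    using im_cross[of 1 u 0 v m n] by (simp add: L_def D0_def)
  have imb: "\<bar>Im (cnj z * y)\<bar> \<le> cmod z * cmod y" for z y :: complex
    using abs_Im_le_cmod[of "cnj z * y"] by (simp add: norm_mult)
  define S where "S = {(m,n). L m n \<noteq> 0 \<and> cmod (L m n) \<le> cmod u}"
  define B where "B = cmod u * (cmod u + cmod v)"
  define K where "K = ceiling (B / \<bar>D0\<bar>)"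
  have bnd: "\<bar>m\<bar> \<le> K" if "\<bar>of_int m * D0\<bar> \<le> B" for m :: int
  proof -
    have "\<bar>real_of_int m\<bar> * \<bar>D0\<bar> \<le> B" using that by (simp add: abs_mult)
    then have "\<bar>real_of_int m\<bar> \<le> B / \<bar>D0\<bar>" using D0nz by (simp add: field_simps)
    also have "... \<le> of_int K" unfolding K_def by (rule le_of_int_ceiling)
    finally show ?thesis by linarith
  qed
  have Sb: "S \<subseteq> {-K..K} \<times> {-K..K}"
  proof
    fix x assume "x \<in> S"
    then obtain m n where x: "x = (m,n)" and le: "cmod (L m n) \<le> cmod u" by (auto simp: S_def)
    have "\<bar>of_int m * D0\<bar> \<le> cmod (L m n) * cmod v" using imb[of "L m n" v] cramer1 by simp
    also have "... \<le> cmod u * cmod v" using le by (simp add: mult_right_mono)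
    also have "... \<le> B" by (simp add: B_def algebra_simps)
    finally have m: "\<bar>m\<bar> \<le> K" by (rule bnd)
    have "\<bar>of_int n * D0\<bar> \<le> cmod u * cmod (L m n)" using imb[of u "L m n"] cramer2 by simp
    also have "... \<le> cmod u * cmod u" using le by (simp add: mult_left_mono)
    also have "... \<le> B" by (simp add: B_def algebra_simps)
    finally have n: "\<bar>n\<bar> \<le> K" by (rule bnd)
    show "x \<in> {-K..K} \<times> {-K..K}" using m n x by auto
  qed
  have finS: "finite S" by (rule finite_subset[OF Sb]) auto
  have S10: "(1,0) \<in> S" using u0 by (simp add: S_def L_def)
  define f where "f = (\<lambda>x. cmod (L (fst x) (snd x)))"
  define z0 where "z0 = arg_min_on f S"
  have z0S: "z0 \<in> S" using arg_min_if_finite(1)[OF finS] S10 unfolding z0_def by blast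
  have z0min: "f z0 \<le> f y" if "y \<in> S" for y
    using arg_min_least[OF finS _ that] that unfolding z0_def by blast
  obtain m0 n0 where z0e: "z0 = (m0, n0)" by (cases z0)
  define U where "U = L m0 n0"
  have U0: "U \<noteq> 0" and Uu: "cmod U \<le> cmod u" using z0S by (auto simp: S_def z0e U_def)
  have Umin: "cmod U \<le> cmod (L m n)" if "L m n \<noteq> 0" for m n
  proof (cases "cmod (L m n) \<le> cmod u")
    case True
    then have "(m,n) \<in> S" using that by (simp add: S_def)
    then show ?thesis using z0min by (force simp: f_def z0e U_def)
  next
    case False
    then show ?thesis using Uu by linarith
  qed
  have g1: "gcd m0 n0 = 1"
  proof (rule ccontr)
    assume ng: "gcd m0 n0 \<noteq> 1"
    define g where "g = gcd m0 n0"
    have "\<not> (m0 = 0 \<and> n0 = 0)" using U0 by (auto simp: U_def L_def)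
    then have gpos: "g > 0" by (simp add: g_def)
    then have g2: "g \<ge> 2" using ng unfolding g_def by linarith
    obtain m' where m': "m0 = g * m'" unfolding g_def by (metis gcd_dvd1 dvdE)
    obtain n' where n': "n0 = g * n'" unfolding g_def by (metis gcd_dvd2 dvdE)
    have Ug: "U = of_int g * L m' n'" by (simp add: U_def L_def m' n' algebra_simps)
    then have L0: "L m' n' \<noteq> 0" using U0 by auto
    have "cmod U = real_of_int g * cmod (L m' n')" using Ug gpos by (simp add: norm_mult)
    moreover have "cmod (L m' n') > 0" using L0 by simp
    moreover have "real_of_int g \<ge> 2" using g2 by simp
    ultimately have "cmod U \<ge> 2 * cmod (L m' n')" by (simp add: mult_right_mono)
    moreover have "cmod U \<le> cmod (L m' n')" using Umin[OF L0] .
    ultimately show False using \<open>cmod (L m' n') > 0\<close> by linarith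
  qed
  obtain x y where bez: "x * m0 + y * n0 = gcd m0 n0" using bezout_int by blast
  define a' where "a' = -y"
  define b' where "b' = x"
  have det1: "m0 * b' - n0 * a' = 1" using bez g1 by (simp add: a'_def b'_def algebra_simps)
  define V where "V = L a' b'"
  have IV: "Im (cnj U * V) = D0"
    using im_cross[of m0 u n0 v a' b'] det1 by (simp add: U_def V_def L_def D0_def)
  define \<alpha> where "\<alpha> = cmod U"
  have \<alpha>0: "\<alpha> > 0" using U0 by (simp add: \<alpha>_def)
  have h\<alpha>: "h \<le> \<alpha>" using F1[of m0 n0] U0 by (simp add: \<alpha>_def U_def L_def)
  have RU: "Re (cnj U * U) = \<alpha>^2" and IU: "Im (cnj U * U) = 0" using re_self[of U] by (simp_all add: \<alpha>_def)
  have lin: "L (k*m0 + j*a') (k*n0 + j*b') = of_int k * U + of_int j * V" for k j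
    by (simp add: L_def U_def V_def algebra_simps)
  have Rl: "Re (cnj U * (z - (of_int k * U + of_int j * V))) = Re (cnj U * z) - of_int k * Re (cnj U * U) - of_int j * Re (cnj U * V)" for z k j
    by (simp add: algebra_simps)
  have Il: "Im (cnj U * (z - (of_int k * U + of_int j * V))) = Im (cnj U * z) - of_int k * Im (cnj U * U) - of_int j * Im (cnj U * V)" for z k j
    by (simp add: algebra_simps)
  have a20: "\<alpha>^2 \<noteq> 0" using \<alpha>0 by simp
  obtain k' where k': "\<bar>Re (cnj U * V) - of_int k' * \<alpha>^2\<bar> \<le> \<bar>\<alpha>^2\<bar>/2" using rounding[OF a20] by blast
  define z3 where "z3 = V - (of_int k' * U + of_int (-1) * V) - V"
  have z3e: "z3 = - (of_int k' * U + of_int (-1) * V)" by (simp add: z3_def)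
  have "Im (cnj U * (0 - (of_int k' * U + of_int (-1) * V))) = D0" using Il[of 0 k' "-1"] IU IV by simp
  then have Iz3: "Im (cnj U * z3) = D0" by (simp add: z3e)
  have "Re (cnj U * (0 - (of_int k' * U + of_int (-1) * V))) = Re (cnj U * V) - of_int k' * \<alpha>^2"
    using Rl[of 0 k' "-1"] RU by simp
  then have Rz3: "Re (cnj U * z3) = Re (cnj U * V) - of_int k' * \<alpha>^2" by (simp add: z3e)
  have "z3 = - L (k'*m0 + (-1)*a') (k'*n0 + (-1)*b')" unfolding z3e by (subst lin) (rule refl)
  then have z3L: "z3 = L (-(k'*m0 + (-1)*a')) (-(k'*n0 + (-1)*b'))" by (simp add: L_def algebra_simps)
  have z3nz: "z3 \<noteq> 0" using Iz3 D0nz by auto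
  have "\<alpha> \<le> cmod z3" using Umin[of "-(k'*m0 + (-1)*a')" "-(k'*n0 + (-1)*b')"] z3nz z3L by (simp add: \<alpha>_def)
  then have "\<alpha>^2 * \<alpha>^2 \<le> \<alpha>^2 * (cmod z3)^2" using \<alpha>0 by (intro mult_left_mono power_mono) auto
  also have "... = (Re (cnj U * z3))^2 + D0^2" using norm_coord[of U z3] Iz3 by (simp add: \<alpha>_def)
  also have "(Re (cnj U * z3))^2 \<le> (\<alpha>^2/2)^2" unfolding Rz3 using k' by (intro sq_le_helper) simp
  finally have gam: "3*(\<alpha>^2*\<alpha>^2) \<le> 4*D0^2" by (simp add: power_divide)
  obtain j where j: "\<bar>Im (cnj U * w) - of_int j * D0\<bar> \<le> \<bar>D0\<bar>/2" using rounding[OF D0nz] by blast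
  obtain k where k: "\<bar>(Re (cnj U * w) - of_int j * Re (cnj U * V)) - of_int k * \<alpha>^2\<bar> \<le> \<bar>\<alpha>^2\<bar>/2"
    using rounding[OF a20] by blast
  define z where "z = w - (of_int k * U + of_int j * V)"
  have Rz: "Re (cnj U * z) = (Re (cnj U * w) - of_int j * Re (cnj U * V)) - of_int k * \<alpha>^2"
    using Rl[of w k j] RU by (simp add: z_def)
  have Iz: "Im (cnj U * z) = Im (cnj U * w) - of_int j * D0"
    using Il[of w k j] IU IV by (simp add: z_def)
  have "\<alpha>^2 * (cmod z)^2 = (Re (cnj U * z))^2 + (Im (cnj U * z))^2" using norm_coord[of U z] by (simp add: \<alpha>_def)
  also have "... \<le> (\<alpha>^2/2)^2 + (D0/2)^2"
    using sq_le_helper[of "Re (cnj U * z)" "\<alpha>^2/2"] sq_le_helper[of "Im (cnj U * z)" "\<bar>D0\<bar>/2"] Rz Iz k j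
    by (simp add: power_divide)
  finally have zb: "4*(\<alpha>^2 * (cmod z)^2) \<le> \<alpha>^2*\<alpha>^2 + D0^2" by (simp add: power_divide)
  define \<gamma> where "\<gamma> = \<bar>D0\<bar>/\<alpha>"
  have ag: "\<alpha>^2*\<gamma>^2 = D0^2" using \<alpha>0 by (simp add: \<gamma>_def power_divide)
  have g2: "\<gamma>^2 = D0^2/\<alpha>^2" by (simp add: \<gamma>_def power_divide)
  have "3*\<alpha>^2 \<le> 4*\<gamma>^2" using gam \<alpha>0 unfolding g2 by (simp add: field_simps power2_eq_square)
  moreover have "4*(cmod z)^2 \<le> \<alpha>^2 + \<gamma>^2" using zb \<alpha>0 unfolding g2 by (simp add: field_simps power2_eq_square)
  moreover have "z = w - L (k*m0 + j*a') (k*n0 + j*b')" by (simp add: z_def lin)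
  ultimately show ?thesis using h\<alpha> ag unfolding L_def D0_def by blast
qed



definition "w3 = complex_of_real (sqrt 3) * \<i>"
definition "N0 = FlatTorus 1 w3"
definition "q0 = Complex (1/2) (sqrt 3 / 2)"

lemma norm_lat: "(cmod (of_int m * 1 + of_int n * w3 + t))^2 = (m + Re t)^2 + (sqrt 3 * n + Im t)^2"
  by (simp add: cmod_power2 w3_def mult.commute)

lemma deck_N0: "g \<in> deck_group N0 \<Longrightarrow> \<exists>m n. g = (\<lambda>z. z + (of_int m * 1 + of_int n * w3))"
  by (auto simp: N0_def add.assoc)

lemma lat_small: fixes m n :: int
  assumes "cmod (of_int m * 1 + of_int n * w3) < 1" shows "of_int m * 1 + of_int n * w3 = 0"
proof -
  have "(cmod (of_int m * 1 + of_int n * w3 + 0))^2 < 1^2" using assms by (intro power_strict_mono) auto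
  then have lt: "real_of_int m ^2 + 3 * (real_of_int n)^2 < 1" unfolding norm_lat by (simp add: power_mult_distrib)
  have "n = 0"
  proof (rule ccontr)
    assume "n \<noteq> 0"
    then have "(real_of_int n)^2 \<ge> 1" by (smt (verit) of_int_1_le_iff of_int_power zero_less_power2 int_one_le_iff_zero_less)
    then show False using lt by (smt (verit) zero_le_power2)
  qed
  moreover have "m = 0"
  proof (rule ccontr)
    assume "m \<noteq> 0"
    then have "(real_of_int m)^2 \<ge> 1" by (smt (verit) of_int_1_le_iff of_int_power zero_less_power2 int_one_le_iff_zero_less)
    then show False using lt by (smt (verit) zero_le_power2)
  qed
  ultimately show ?thesis by simp
qed

lemma half_int: fixes m :: int shows "(real_of_int m + 1/2)^2 \<ge> 1/4"
proof -
  have "(2*m + 1)^2 \<ge> (1::int)"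
  proof -
    have "2*m+1 \<noteq> 0" by presburger
    then have "\<bar>2*m+1\<bar> \<ge> 1" by linarith
    then show ?thesis by (metis abs_ge_zero one_le_power power2_abs)
  qed
  moreover have "real_of_int ((2*m + 1)^2) = (2*real_of_int m + 1)^2" by simp
  ultimately have "(2*real_of_int m + 1)^2 \<ge> 1" by (metis of_int_le_iff of_int_1)
  then show ?thesis by (simp add: power2_eq_square algebra_simps)
qed

lemma far_q0: fixes m n :: int shows "1 \<le> dist 0 (q0 + (of_int m * 1 + of_int n * w3))"
proof -
  have "(dist 0 (q0 + (of_int m * 1 + of_int n * w3)))^2 = (cmod (of_int m * 1 + of_int n * w3 + q0))^2"
    by (simp add: dist_0_norm add.commute)
  also have "... = (m + 1/2)^2 + (sqrt 3 * n + sqrt 3 / 2)^2" unfolding norm_lat by (simp add: q0_def)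
  also have "(sqrt 3 * n + sqrt 3 / 2)^2 = 3 * (n + 1/2)^2" by (simp add: power2_eq_square algebra_simps)
  finally have "(dist 0 (q0 + (of_int m * 1 + of_int n * w3)))^2 \<ge> 1"
    using half_int[of m] half_int[of n] by linarith
  then show ?thesis by (metis abs_of_nonneg one_le_power power2_abs zero_le_dist abs_le_square_iff one_power2 real_sqrt_le_iff real_sqrt_one  power2_le_imp_le zero_le_one)
qed

lemma emb0: "embedded_disk N0 c (1/2)"
  unfolding embedded_disk_def
proof (intro allI impI)
  fix x y g assume xc: "dist x c < 1/2" and yc: "dist y c < 1/2" and g: "g \<in> deck_group N0" and xg: "x = g y"
  obtain m n where ge: "g = (\<lambda>z. z + (of_int m * 1 + of_int n * w3))" using deck_N0[OF g] by blast
  have "cmod (of_int m * 1 + of_int n * w3) = dist x y" using xg ge by (simp add: dist_norm)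
  also have "dist x y \<le> dist x c + dist y c" by (metis dist_commute dist_triangle)
  finally have "cmod (of_int m * 1 + of_int n * w3) < 1" using xc yc by linarith
  then have "of_int m * 1 + of_int n * w3 = 0" by (rule lat_small)
  then show "x = y" using xg ge by simp
qed

lemma disj0: "disjoint_disks N0 0 q0 (1/2)"
  unfolding disjoint_disks_def
proof (intro allI impI notI)
  fix x y g assume xc: "dist x 0 < 1/2" and yc: "dist y q0 < 1/2" and g: "g \<in> deck_group N0" and xg: "x = g y"
  obtain m n where ge: "g = (\<lambda>z. z + (of_int m * 1 + of_int n * w3))" using deck_N0[OF g] by blast
  have "dist 0 (q0 + (of_int m * 1 + of_int n * w3)) \<le> dist x 0 + dist x (q0 + (of_int m * 1 + of_int n * w3))"
    by (metis dist_commute dist_triangle)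
  also have "dist x (q0 + (of_int m * 1 + of_int n * w3)) = dist y q0" using xg ge by (simp add: dist_norm)
  finally show False using far_q0[of m n] xc yc by linarith
qed

lemma config0: "two_disk_config N0 0 q0 1"
  unfolding two_disk_config_def
  using emb0 disj0 by (simp add: N0_def w3_def)

lemma vol0: "flat_vol N0 = sqrt 3" by (simp add: N0_def w3_def)

lemma dist0: "1 \<le> flat_dist N0 0 q0"
proof (rule flat_dist_ge)
  show "deck_group N0 \<noteq> {}" using torus_mem[of 0 1 0 w3] by (auto simp: N0_def)
  fix g assume "g \<in> deck_group N0"
  then obtain m n where ge: "g = (\<lambda>z. z + (of_int m * 1 + of_int n * w3))" using deck_N0 by blast
  show "1 \<le> dist 0 (g q0)" using far_q0[of m n] by (simp add: ge)
qed

lemma ratio0: "sqrt 5 / sqrt 3 \<le> two_disk_ratio N0 0 q0 1"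
proof -
  have "(1::real) \<le> (flat_dist N0 0 q0)^2" using dist0 by (metis one_le_power)
  then have "sqrt 5 \<le> sqrt (4 * 1^2 + (flat_dist N0 0 q0)^2)" by simp
  then show ?thesis unfolding two_disk_ratio_def vol0 by (simp add: divide_right_mono)
qed


lemma torus_bound:
  assumes cfg: "two_disk_config (FlatTorus u v) p q h"
  shows "3*h^2*(4*h^2 + (flat_dist (FlatTorus u v) p q)^2) \<le> 5*(flat_vol (FlatTorus u v))^2"
proof -
  have D: "Im (cnj u * v) \<noteq> 0" and h: "h > 0" and emb: "embedded_disk (FlatTorus u v) p (h/2)"
    and disj: "disjoint_disks (FlatTorus u v) p q (h/2)"
    using cfg by (auto simp: two_disk_config_def)
  have F1: "h \<le> cmod (of_int m * u + of_int n * v)" if "of_int m * u + of_int n * v \<noteq> 0" for m n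
    using emb_trans[OF emb torus_mem that] by simp
  have far: "h \<le> dist p (g q)" if gd: "g \<in> deck_group (FlatTorus u v)" for g
  proof -
    obtain m n where ge: "g = (\<lambda>z. z + (of_int m * u + of_int n * v))" using gd by (auto simp: add.assoc)
    have "g = (\<lambda>z. (if True then z else cnj z) + (of_int m * u + of_int n * v))" using ge by simp
    from disj_far[OF disj gd this] show ?thesis by simp
  qed
  define d where "d = flat_dist (FlatTorus u v) p q"
  have hd: "h \<le> d" unfolding d_def
    by (rule flat_dist_ge) (use far torus_mem[of 0 u 0 v] in auto)
  obtain m n \<alpha> \<gamma> where h\<alpha>: "h \<le> \<alpha>" and g: "3*\<alpha>^2 \<le> 4*\<gamma>^2" and ag: "\<alpha>^2*\<gamma>^2 = (Im (cnj u * v))^2"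
    and zb: "4*(cmod ((p - q) - (of_int m * u + of_int n * v)))^2 \<le> \<alpha>^2 + \<gamma>^2"
    using torus_geom[OF D h F1, of "p - q"] by blast
  have "d \<le> dist p ((\<lambda>z. z + (of_int m * u + of_int n * v)) q)" unfolding d_def
    by (rule flat_dist_le[OF torus_mem])
  also have "... = cmod ((p - q) - (of_int m * u + of_int n * v))" by (simp add: dist_norm algebra_simps)
  finally have "d^2 \<le> (cmod ((p - q) - (of_int m * u + of_int n * v)))^2" using hd h by (intro power_mono) auto
  then have d2: "4*d^2 \<le> \<alpha>^2 + \<gamma>^2" using zb by linarith
  have d1: "h^2 \<le> d^2" using hd h by (intro power_mono) auto
  have "3*h^2*(4*h^2 + d^2) \<le> 5*\<alpha>^2*\<gamma>^2" by (rule torus_ineq[OF h h\<alpha> g d1 d2])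
  then show ?thesis using ag by (simp add: d_def power2_abs)
qed


lemma klein_dist2:
  "(dist p ((\<lambda>z. (if even k then z else cnj z) + (of_int k * complex_of_real a + of_int n * complex_of_real b * \<i>)) q))^2
   = (Re p - Re q - of_int k * a)^2 + (Im p - (if even k then Im q else - Im q) - of_int n * b)^2"
  by (cases "even k") (simp_all add: dist_norm cmod_power2 algebra_simps)

lemma klein_facts:
  assumes cfg: "two_disk_config (FlatKlein a b) p q h"
  shows "a > 0" "b > 0" "h > 0" "h \<le> 2*a" "h \<le> b"
    "\<And>n::int. h^2 \<le> a^2 + (2*Im p - of_int n * b)^2"
    "\<And>n::int. h^2 \<le> a^2 + (2*Im q - of_int n * b)^2"
    "\<And>k n::int. h^2 \<le> (Re p - Re q - of_int k * a)^2 + (Im p - (if even k then Im q else - Im q) - of_int n * b)^2"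
    "\<And>k n::int. (flat_dist (FlatKlein a b) p q)^2 \<le> (Re p - Re q - of_int k * a)^2 + (Im p - (if even k then Im q else - Im q) - of_int n * b)^2"
    "h^2 \<le> (flat_dist (FlatKlein a b) p q)^2"
proof -
  have a: "a > 0" and b: "b > 0" and h: "h > 0" and embp: "embedded_disk (FlatKlein a b) p (h/2)"
    and embq: "embedded_disk (FlatKlein a b) q (h/2)"
    and disj: "disjoint_disks (FlatKlein a b) p q (h/2)"
    using cfg by (auto simp: two_disk_config_def)
  show "a > 0" "b > 0" "h > 0" by fact+
  have m20: "(\<lambda>z. z + (of_int 2 * complex_of_real a + of_int 0 * complex_of_real b * \<i>)) \<in> deck_group (FlatKlein a b)"
    using klein_mem[of 2 a 0 b] by simp
  have "2*(h/2) \<le> cmod (of_int 2 * complex_of_real a + of_int 0 * complex_of_real b * \<i>)"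
    by (rule emb_trans[OF embp m20]) (use a in simp)
  then show "h \<le> 2*a" using a by simp
  have m01: "(\<lambda>z. z + (of_int 0 * complex_of_real a + of_int 1 * complex_of_real b * \<i>)) \<in> deck_group (FlatKlein a b)"
    using klein_mem[of 0 a 1 b] by simp
  have "2*(h/2) \<le> cmod (of_int 0 * complex_of_real a + of_int 1 * complex_of_real b * \<i>)"
    by (rule emb_trans[OF embp m01]) (use b in simp)
  then show "h \<le> b" using b by (simp add: norm_mult)
  have glide: "h^2 \<le> a^2 + (2*Im c - of_int n * b)^2" if emb: "embedded_disk (FlatKlein a b) c (h/2)" for c and n :: int
  proof -
    have mm: "(\<lambda>z. cnj z + (of_int 1 * complex_of_real a + of_int n * complex_of_real b * \<i>)) \<in> deck_group (FlatKlein a b)"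
      using klein_mem[of 1 a n b] by simp
    have "2*(h/2) \<le> cmod (cnj c + (of_int 1 * complex_of_real a + of_int n * complex_of_real b * \<i>) - c)"
      by (rule emb_glide[OF emb mm]) (use a in simp)
    then have "h^2 \<le> (cmod (cnj c + (of_int 1 * complex_of_real a + of_int n * complex_of_real b * \<i>) - c))^2"
      using h by (intro power_mono) auto
    also have "... = a^2 + (2*Im c - of_int n * b)^2" by (simp only: cmod_power2) (simp add: power2_eq_square algebra_simps)
    finally show ?thesis .
  qed
  show "\<And>n::int. h^2 \<le> a^2 + (2*Im p - of_int n * b)^2" using glide[OF embp] .
  show "\<And>n::int. h^2 \<le> a^2 + (2*Im q - of_int n * b)^2" using glide[OF embq] .
  have far: "h \<le> dist p (g q)" if gd: "g \<in> deck_group (FlatKlein a b)" for g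
  proof -
    obtain k n where ge: "g = (\<lambda>z. (if even k then z else cnj z) + (of_int k * complex_of_real a + of_int n * complex_of_real b * \<i>))"
      using gd by (auto simp: add.assoc)
    from disj_far[OF disj gd ge] show ?thesis by simp
  qed
  show "\<And>k n::int. h^2 \<le> (Re p - Re q - of_int k * a)^2 + (Im p - (if even k then Im q else - Im q) - of_int n * b)^2"
  proof -
    fix k n :: int
    have "h \<le> dist p ((\<lambda>z. (if even k then z else cnj z) + (of_int k * complex_of_real a + of_int n * complex_of_real b * \<i>)) q)"
      by (rule far[OF klein_mem])
    then have "h^2 \<le> (dist p ((\<lambda>z. (if even k then z else cnj z) + (of_int k * complex_of_real a + of_int n * complex_of_real b * \<i>)) q))^2"
      using h by (intro power_mono) auto
    then show "h^2 \<le> (Re p - Re q - of_int k * a)^2 + (Im p - (if even k then Im q else - Im q) - of_int n * b)^2"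
      by (simp only: klein_dist2)
  qed
  have hd: "h \<le> flat_dist (FlatKlein a b) p q"
    by (rule flat_dist_ge) (use far klein_mem[of 0 a 0 b] in auto)
  then show "h^2 \<le> (flat_dist (FlatKlein a b) p q)^2" using h by (intro power_mono) auto
  show "\<And>k n::int. (flat_dist (FlatKlein a b) p q)^2 \<le> (Re p - Re q - of_int k * a)^2 + (Im p - (if even k then Im q else - Im q) - of_int n * b)^2"
  proof -
    fix k n :: int
    have "flat_dist (FlatKlein a b) p q \<le> dist p ((\<lambda>z. (if even k then z else cnj z) + (of_int k * complex_of_real a + of_int n * complex_of_real b * \<i>)) q)"
      by (rule flat_dist_le[OF klein_mem])
    then have "(flat_dist (FlatKlein a b) p q)^2 \<le> (dist p ((\<lambda>z. (if even k then z else cnj z) + (of_int k * complex_of_real a + of_int n * complex_of_real b * \<i>)) q))^2"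
      using hd h by (intro power_mono) auto
    then show "(flat_dist (FlatKlein a b) p q)^2 \<le> (Re p - Re q - of_int k * a)^2 + (Im p - (if even k then Im q else - Im q) - of_int n * b)^2"
      by (simp only: klein_dist2)
  qed
qed


lemma klein_bound:
  assumes cfg: "two_disk_config (FlatKlein a b) p q h"
  shows "3*h^2*(4*h^2 + (flat_dist (FlatKlein a b) p q)^2) \<le> 5*(flat_vol (FlatKlein a b))^2"
proof -
  note F = klein_facts[OF cfg]
  have a: "a > 0" and b: "b > 0" and h: "h > 0" and h2a: "h \<le> 2*a" and hb: "h \<le> b"
    using F by auto
  define d where "d = flat_dist (FlatKlein a b) p q"
  define x where "x = Re p - Re q"
  define y1 where "y1 = Im p"
  define y2 where "y2 = Im q"
  have gp: "h^2 \<le> a^2 + (2*y1 - of_int n * b)^2" for n :: int using F(6)[of n] by (simp add: y1_def)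
  have gq: "h^2 \<le> a^2 + (2*y2 - of_int n * b)^2" for n :: int using F(7)[of n] by (simp add: y2_def)
  have far2: "h^2 \<le> (x - of_int k * a)^2 + (y1 - (if even k then y2 else - y2) - of_int n * b)^2" for k n :: int
    using F(8)[of k n] by (cases "even k") (simp_all add: x_def y1_def y2_def)
  have dle: "d^2 \<le> (x - of_int k * a)^2 + (y1 - (if even k then y2 else - y2) - of_int n * b)^2" for k n :: int
    using F(9)[of k n] by (cases "even k") (simp_all add: d_def x_def y1_def y2_def)
  have dge: "h^2 \<le> d^2" using F(10) by (simp add: d_def)
  have b0: "b \<noteq> 0" using b by simp
  obtain k1 where k1: "\<bar>(y1 - y2) - of_int k1 * b\<bar> \<le> \<bar>b\<bar>/2" using rounding[OF b0] by blast
  obtain k2 where k2: "\<bar>(y1 + y2) - of_int k2 * b\<bar> \<le> \<bar>b\<bar>/2" using rounding[OF b0] by blast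
  define U where "U = (y1 - y2) - of_int k1 * b"
  define W where "W = (y1 + y2) - of_int k2 * b"
  have U: "\<bar>U\<bar> \<le> b/2" using k1 b by (simp add: U_def)
  have W: "\<bar>W\<bar> \<le> b/2" using k2 b by (simp add: W_def)
  have g1: "h^2 \<le> a^2 + (U+W)^2" using gp[of "k1+k2"] by (simp add: U_def W_def algebra_simps)
  have g2: "h^2 \<le> a^2 + (U+W-b)^2" using gp[of "k1+k2+1"] by (simp add: U_def W_def algebra_simps)
  have g3: "h^2 \<le> a^2 + (U+W+b)^2" using gp[of "k1+k2-1"] by (simp add: U_def W_def algebra_simps)
  have g4: "h^2 \<le> a^2 + (W-U)^2" using gq[of "k2-k1"] by (simp add: U_def W_def algebra_simps)
  have g5: "h^2 \<le> a^2 + (W-U-b)^2" using gq[of "k2-k1+1"] by (simp add: U_def W_def algebra_simps)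
  have g6: "h^2 \<le> a^2 + (W-U+b)^2" using gq[of "k2-k1-1"] by (simp add: U_def W_def algebra_simps)
  have key: "3*h^2*(4*h^2 + d^2) \<le> 5*a^2*b^2"
    if E: "E \<ge> 0" and Oo: "Oo \<ge> 0" and EO: "E + Oo = a" and ke: "even ke" and ko: "odd ko"
      and xe: "(x - of_int ke * a)^2 = E^2" and xo: "(x - of_int ko * a)^2 = Oo^2" for E Oo ke ko
  proof -
    have DE: "d^2 \<le> E^2 + U^2" using dle[of ke k1] ke xe by (simp add: U_def)
    have hE: "h^2 \<le> E^2 + U^2" using far2[of ke k1] ke xe by (simp add: U_def)
    have DO: "d^2 \<le> Oo^2 + W^2" using dle[of ko k2] ko xo by (simp add: W_def)
    have hO: "h^2 \<le> Oo^2 + W^2" using far2[of ko k2] ko xo by (simp add: W_def)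
    show ?thesis by (rule klein_ineq[OF h h2a hb E Oo EO U W g1 g2 g3 g4 g5 g6 dge DE DO hE hO])
  qed
  define k0 where "k0 = floor (x / a)"
  define \<delta> where "\<delta> = x - of_int k0 * a"
  have "of_int k0 \<le> x / a" "x / a < of_int k0 + 1" unfolding k0_def by linarith+
  then have "of_int k0 * a \<le> x" "x < (of_int k0 + 1) * a" using a by (simp_all add: field_simps)
  then have \<delta>0: "0 \<le> \<delta>" and \<delta>a: "\<delta> < a" by (simp_all add: \<delta>_def algebra_simps)
  have x0: "(x - of_int k0 * a)^2 = \<delta>^2" by (simp add: \<delta>_def)
  have x1: "(x - of_int (k0+1) * a)^2 = (a - \<delta>)^2" by (simp add: \<delta>_def power2_eq_square algebra_simps)
  have "3*h^2*(4*h^2 + d^2) \<le> 5*a^2*b^2"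
  proof (cases "even k0")
    case True
    then show ?thesis by (intro key[OF \<delta>0 _ _ True _ x0 x1]) (use \<delta>a in auto)
  next
    case False
    then show ?thesis by (intro key[OF _ \<delta>0 _ _ False x1 x0]) (use \<delta>a in auto)
  qed
  then show ?thesis by (simp add: d_def power_mult_distrib)
qed

lemma ratio_bound:
  assumes cfg: "two_disk_config N p q h"
  shows "two_disk_ratio N p q h \<le> sqrt 5 / sqrt 3"
proof -
  define d where "d = flat_dist N p q"
  define V where "V = flat_vol N"
  have h: "h > 0" using cfg by (simp add: two_disk_config_def)
  have main: "3*h^2*(4*h^2 + d^2) \<le> 5*V^2"
  proof (cases N)
    case (FlatTorus u v)
    then show ?thesis using torus_bound[of u v p q h] cfg by (simp add: d_def V_def)
  next
    case (FlatKlein a b)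
    then show ?thesis using klein_bound[of a b p q h] cfg by (simp add: d_def V_def)
  qed
  have V0: "V > 0"
  proof (cases N)
    case (FlatTorus u v)
    then show ?thesis using cfg by (simp add: V_def two_disk_config_def)
  next
    case (FlatKlein a b)
    then show ?thesis using cfg by (simp add: V_def two_disk_config_def)
  qed
  have r0: "0 \<le> two_disk_ratio N p q h" using h V0 by (simp add: two_disk_ratio_def V_def)
  have "(two_disk_ratio N p q h)^2 = h^2 * (4*h^2 + d^2) / V^2"
    using h V0 by (simp add: two_disk_ratio_def d_def V_def power_divide power_mult_distrib)
  also have "... \<le> (5*V^2/3) / V^2" using main V0 by (intro divide_right_mono) auto
  also have "... = (sqrt 5 / sqrt 3)^2" using V0 by (simp add: power_divide)
  finally show ?thesis by (rule power2_le_imp_le) simp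
qed

theorem lemma6:
  shows "\<exists>N p q h. two_disk_config N p q h \<and>
           (\<forall>N' p' q' h'. two_disk_config N' p' q' h' \<longrightarrow>
              two_disk_ratio N' p' q' h' \<le> two_disk_ratio N p q h)"
proof (intro exI conjI allI impI)
  show "two_disk_config N0 0 q0 1" by (rule config0)
  fix N' p' q' h' assume "two_disk_config N' p' q' h'"
  then have "two_disk_ratio N' p' q' h' \<le> sqrt 5 / sqrt 3" by (rule ratio_bound)
  also have "... \<le> two_disk_ratio N0 0 q0 1" by (rule ratio0)
  finally show "two_disk_ratio N' p' q' h' \<le> two_disk_ratio N0 0 q0 1" .
qed

end
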